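(* Any $(M,d_s,d_x,\epsilon)$ code must satisfy \[\epsilon\ge\sup_{P_{\bar X|\bar Z\bar Y}}\ \sup_{\gamma\ge0}\Big\{\mathbb E\Big[\inf_{z\in\widehat{\mathcal S},\,y\in\widehat{\mathcal X}}\mathbb P\big[f_{\bar X|\bar Z\bar Y}(S,X,z,y)\ge\gamma\mid X\big]\Big]-\exp(-\gamma)\Big\},\] where $(S,X)\sim P_{SX}$, the first supremum is over conditional distributions $P_{\bar X|\bar Z\bar Y}:\widehat{\mathcal S}\times\widehat{\mathcal X}\to\mathcal X$ such that the Radon–Nikodym derivative of $P_{\bar X|\bar Z=z,\bar Y=y}$ with respect to $P_X$ at $x$ exists for every $z\in\widehat{\mathcal S}$, $y\in\widehat{\mathcal X}$ and $P_X$-a.e. $x$, and \[f_{\bar X|\bar Z\bar Y}(s,x,z,y)=\log\frac{\mathrm dP_{\bar X|\bar Z=z,\bar Y=y}}{\mathrm dP_X}(x)+\sup_{\lambda_s\ge0}\lambda_s(\mathsf d_s(s,z)-d_s)+\sup_{\lambda_x\ge0}\lambda_x(\mathsf d_x(x,y)-d_x)-\log M.\]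
   Context: Let $\mathcal S,\mathcal X,\widehat{\mathcal S},\widehat{\mathcal X}$ be finite sets, $P_{SX}$ a distribution on $\mathcal S\times\mathcal X$, and $\mathsf d_s:\mathcal S\times\widehat{\mathcal S}\to[0,\infty)$, $\mathsf d_x:\mathcal X\times\widehat{\mathcal X}\to[0,\infty)$ distortion measures; fix $d_s,d_x\ge0$. An $(M,d_s,d_x,\epsilon)$ code is a random encoder $P_{U|X}:\mathcal X\to\{1,\dots,M\}$ and a random decoder $P_{ZY|U}:\{1,\dots,M\}\to\widehat{\mathcal S}\times\widehat{\mathcal X}$ (so $S-X-U-(Z,Y)$) such that $\mathbb P[\mathsf d_s(S,Z)>d_s\text{ or }\mathsf d_x(X,Y)>d_x]\le\epsilon$. $\log$ and $\exp$ are to a common base. *)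

theory Defs
  imports "HOL-Probability.Probability"
begin

(* P      : joint distribution P_SX of (S,X)
   enc    : random encoder P_{U|X}, messages in {1..M}
   dec    : random decoder P_{ZY|U}
   The Markov chain S - X - U - (Z,Y) is built into the joint law below. *)

definition code_joint ::
  "('s \<times> 'x) pmf \<Rightarrow> ('x \<Rightarrow> nat pmf) \<Rightarrow> (nat \<Rightarrow> ('sh \<times> 'xh) pmf)
     \<Rightarrow> (('s \<times> 'x) \<times> ('sh \<times> 'xh)) pmf" where
  "code_joint P enc dec =
     bind_pmf P (\<lambda>sx. bind_pmf (enc (snd sx)) (\<lambda>u. map_pmf (\<lambda>zy. (sx, zy)) (dec u)))"

definition is_code ::
  "('s \<times> 'x) pmf \<Rightarrow> ('s \<Rightarrow> 'sh \<Rightarrow> real) \<Rightarrow> ('x \<Rightarrow> 'xh \<Rightarrow> real)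
     \<Rightarrow> nat \<Rightarrow> real \<Rightarrow> real \<Rightarrow> real
     \<Rightarrow> ('x \<Rightarrow> nat pmf) \<Rightarrow> (nat \<Rightarrow> ('sh \<times> 'xh) pmf) \<Rightarrow> bool" where
  "is_code P dS dX M ds dx \<epsilon> enc dec \<longleftrightarrow>
     (\<forall>x. set_pmf (enc x) \<subseteq> {1..M}) \<and>
     measure_pmf.prob (code_joint P enc dec)
        {((s, x), (z, y)). dS s z > ds \<or> dX x y > dx} \<le> \<epsilon>"

definition ereal_log :: "real \<Rightarrow> real \<Rightarrow> ereal" where
  "ereal_log b r = (if r = 0 then -\<infinity> else ereal (log b r))"

(* f_{Xbar|Zbar Ybar}(s,x,z,y); logarithm to base b; values in extended reals
   (the suprema over lambda are +infinity when the distortion is exceeded). *)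
definition f_info ::
  "real \<Rightarrow> ('s \<times> 'x) pmf \<Rightarrow> ('sh \<Rightarrow> 'xh \<Rightarrow> 'x pmf) \<Rightarrow> ('s \<Rightarrow> 'sh \<Rightarrow> real)
     \<Rightarrow> ('x \<Rightarrow> 'xh \<Rightarrow> real) \<Rightarrow> nat \<Rightarrow> real \<Rightarrow> real
     \<Rightarrow> 's \<Rightarrow> 'x \<Rightarrow> 'sh \<Rightarrow> 'xh \<Rightarrow> ereal" where
  "f_info b P Q dS dX M ds dx s x z y =
     ereal_log b (enn2real (RN_deriv (measure_pmf (map_pmf snd P)) (measure_pmf (Q z y)) x))
     + (SUP l\<in>{0::real..}. ereal (l * (dS s z - ds)))
     + (SUP l\<in>{0::real..}. ereal (l * (dX x y - dx)))
     - ereal (log b (real M))"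

definition bound_term ::
  "real \<Rightarrow> ('s \<times> 'x) pmf \<Rightarrow> ('sh \<Rightarrow> 'xh \<Rightarrow> 'x pmf) \<Rightarrow> ('s \<Rightarrow> 'sh \<Rightarrow> real)
     \<Rightarrow> ('x \<Rightarrow> 'xh \<Rightarrow> real) \<Rightarrow> nat \<Rightarrow> real \<Rightarrow> real \<Rightarrow> real \<Rightarrow> real" where
  "bound_term b P Q dS dX M ds dx \<gamma> =
     measure_pmf.expectation (map_pmf snd P)
       (\<lambda>x. INF zy\<in>(UNIV :: ('sh \<times> 'xh) set).
              measure_pmf.prob (cond_pmf P {sx. snd sx = x})
                {sx. ereal \<gamma> \<le> f_info b P Q dS dX M ds dx (fst sx) (snd sx) (fst zy) (snd zy)})
     - b powr (- \<gamma>)"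

end

theory Submission
  imports Defs
begin
lemma RN_pmf:
  fixes p q :: "'a pmf"
  assumes ac: "absolutely_continuous (measure_pmf p) (measure_pmf q)"
    and x: "pmf p x > 0"
  shows "enn2real (RN_deriv (measure_pmf p) (measure_pmf q) x) = pmf q x / pmf p x"
proof -
  define f where "f y = ennreal (pmf q y / pmf p y)" for y
  have z: "pmf q y = 0" if "pmf p y = 0" for y
  proof -
    have "{y} \<in> null_sets (measure_pmf p)" using that
      by (simp add: null_sets_def measure_pmf.emeasure_eq_measure measure_pmf_single)
    then have "{y} \<in> null_sets (measure_pmf q)" using ac unfolding absolutely_continuous_def by blast
    then show ?thesis
      by (simp add: null_sets_def measure_pmf.emeasure_eq_measure measure_pmf_single)
  qed
  have "density (measure_pmf p) f = density (count_space UNIV) (\<lambda>y. ennreal (pmf p y) * f y)"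
    unfolding measure_pmf_eq_density[of p]
    by (subst density_density_eq) auto
  also have "(\<lambda>y. ennreal (pmf p y) * f y) = (\<lambda>y. ennreal (pmf q y))"
  proof
    fix y show "ennreal (pmf p y) * f y = ennreal (pmf q y)"
      using z[of y] pmf_nonneg[of p y]
      by (cases "pmf p y = 0") (auto simp: f_def ennreal_mult'[symmetric])
  qed
  also have "density (count_space UNIV) \<dots> = measure_pmf q"
    by (rule measure_pmf_eq_density[symmetric])
  finally have eq: "density (measure_pmf p) f = measure_pmf q" .
  have "AE y in measure_pmf p. f y = RN_deriv (measure_pmf p) (measure_pmf q) y"
    by (rule RN_deriv_unique_sigma_finite[OF _ eq]) (auto intro: measure_pmf.sigma_finite_measure_axioms)
  then have "f x = RN_deriv (measure_pmf p) (measure_pmf q) x"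
    using x by (simp add: AE_measure_pmf_iff set_pmf_iff)
  then show ?thesis by (metis f_def enn2real_ennreal divide_nonneg_nonneg pmf_nonneg)
qed

lemma px_sum:
  fixes P :: "('s::finite \<times> 'x::finite) pmf"
  shows "pmf (map_pmf snd P) x = (\<Sum>sx\<in>UNIV. if snd sx = x then pmf P sx else 0)"
proof -
  have "pmf (map_pmf snd P) x = sum (pmf P) {sx \<in> UNIV. snd sx = x}"
    by (simp add: pmf_map measure_measure_pmf_finite vimage_def)
  also have "\<dots> = (\<Sum>sx\<in>UNIV. if snd sx = x then pmf P sx else 0)"
    by (rule sum.inter_filter) simp
  finally show ?thesis .
qed

lemma pmf_code_joint:
  fixes P :: "('s::finite \<times> 'x::finite) pmf" and dec :: "nat \<Rightarrow> ('sh::finite \<times> 'xh::finite) pmf"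
  shows "pmf (code_joint P enc dec) (sx, zy) = pmf P sx * pmf (bind_pmf (enc (snd sx)) dec) zy"
proof -
  have cj: "code_joint P enc dec = bind_pmf P (\<lambda>sx. map_pmf (\<lambda>zy. (sx, zy)) (bind_pmf (enc (snd sx)) dec))"
    unfolding code_joint_def by (simp add: map_bind_pmf)
  have m: "pmf (map_pmf (\<lambda>zy. (sx', zy)) K) (sx, zy) = (if sx' = sx then pmf K zy else 0)" for sx' and K :: "('sh \<times> 'xh) pmf"
  proof (cases "sx' = sx")
    case True
    then show ?thesis by (simp add: pmf_map_inj' inj_on_def)
  next
    case False
    then show ?thesis by (auto simp: pmf_eq_0_set_pmf)
  qed
  have "pmf (code_joint P enc dec) (sx, zy) = (\<Sum>sx'\<in>UNIV. pmf P sx' * (if sx' = sx then pmf (bind_pmf (enc (snd sx')) dec) zy else 0))"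
    unfolding cj pmf_bind m
    by (subst integral_measure_pmf[of UNIV]) auto
  also have "\<dots> = pmf P sx * pmf (bind_pmf (enc (snd sx)) dec) zy"
    by (simp add: if_distrib cong: if_cong)
  finally show ?thesis .
qed

lemma W_le:
  fixes M :: nat
  assumes "set_pmf (enc x) \<subseteq> {1..M}"
  shows "pmf (bind_pmf (enc x) dec) zy \<le> (\<Sum>u\<in>{1..M}. pmf (dec u) zy)"
proof -
  have "pmf (bind_pmf (enc x) dec) zy = (\<Sum>u\<in>{1..M}. pmf (enc x) u * pmf (dec u) zy)"
    unfolding pmf_bind using assms
    by (subst integral_measure_pmf[of "{1..M}"]) auto
  also have "\<dots> \<le> (\<Sum>u\<in>{1..M}. pmf (dec u) zy)"
    by (intro sum_mono mult_left_le_one_le) (auto simp: pmf_le_1)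
  finally show ?thesis .
qed

lemma key_sum:
  fixes M :: nat and px :: "'x::finite \<Rightarrow> real" and dec :: "nat \<Rightarrow> ('sh::finite \<times> 'xh::finite) pmf"
    and Q :: "'sh \<Rightarrow> 'xh \<Rightarrow> 'x pmf"
  assumes enc: "\<And>x. set_pmf (enc x) \<subseteq> {1..M}" and c: "c \<ge> 0" and px: "\<And>x. px x \<ge> 0"
  shows "(\<Sum>x\<in>UNIV. \<Sum>zy\<in>UNIV. px x * pmf (bind_pmf (enc x) dec) zy *
            of_bool (px x \<le> pmf (Q (fst zy) (snd zy)) x * c)) \<le> c * real M"
proof -
  have "(\<Sum>x\<in>UNIV. \<Sum>zy\<in>UNIV. px x * pmf (bind_pmf (enc x) dec) zy *
            of_bool (px x \<le> pmf (Q (fst zy) (snd zy)) x * c))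
     \<le> (\<Sum>x\<in>UNIV. \<Sum>zy\<in>UNIV. (pmf (Q (fst zy) (snd zy)) x * c) * (\<Sum>u\<in>{1..M}. pmf (dec u) zy))"
  proof (intro sum_mono)
    fix x zy
    have w: "pmf (bind_pmf (enc x) dec) zy \<le> (\<Sum>u\<in>{1..M}. pmf (dec u) zy)" using enc[of x] by (rule W_le)
    show "px x * pmf (bind_pmf (enc x) dec) zy * of_bool (px x \<le> pmf (Q (fst zy) (snd zy)) x * c)
       \<le> pmf (Q (fst zy) (snd zy)) x * c * (\<Sum>u\<in>{1..M}. pmf (dec u) zy)"
    proof (cases "px x \<le> pmf (Q (fst zy) (snd zy)) x * c")
      case True
      then show ?thesis using w px[of x] by (simp add: mult_mono)
    next
      case False
      then show ?thesis using c by (simp add: sum_nonneg)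
    qed
  qed
  also have "\<dots> = (\<Sum>zy\<in>UNIV. \<Sum>x\<in>UNIV. (pmf (Q (fst zy) (snd zy)) x * c) * (\<Sum>u\<in>{1..M}. pmf (dec u) zy))"
    by (rule sum.swap)
  also have "\<dots> = (\<Sum>zy\<in>UNIV. ((\<Sum>x\<in>UNIV. pmf (Q (fst zy) (snd zy)) x) * c) * (\<Sum>u\<in>{1..M}. pmf (dec u) zy))"
    by (simp only: sum_distrib_right)
  also have "\<dots> = c * (\<Sum>zy\<in>UNIV. \<Sum>u\<in>{1..M}. pmf (dec u) zy)"
    by (simp add: sum_pmf_eq_1 sum_distrib_left)
  also have "\<dots> = c * (\<Sum>u\<in>{1..M}. \<Sum>zy\<in>UNIV. pmf (dec u) zy)"
    by (simp add: sum.swap[of _ UNIV])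
  also have "\<dots> = c * real M" by (simp add: sum_pmf_eq_1)
  finally show ?thesis .
qed


lemma SUP_zero:
  fixes d ds :: real
  assumes "d \<le> ds"
  shows "(SUP l\<in>{0::real..}. ereal (l * (d - ds))) = 0"
proof (rule antisym)
  show "(SUP l\<in>{0::real..}. ereal (l * (d - ds))) \<le> 0"
    using assms by (intro SUP_least) (auto simp: mult_nonneg_nonpos)
  have "ereal (0 * (d - ds)) \<le> (SUP l\<in>{0::real..}. ereal (l * (d - ds)))"
    by (rule SUP_upper) auto
  then show "0 \<le> (SUP l\<in>{0::real..}. ereal (l * (d - ds)))" by (simp add: zero_ereal_def)
qed

lemma point:
  fixes P :: "('s \<times> 'x) pmf" and Q :: "'sh \<Rightarrow> 'xh \<Rightarrow> 'x pmf" and M :: nat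
  assumes b: "b > 1" and M: "M \<ge> 1" and px: "0 < pmf (map_pmf snd P) x"
    and ac: "absolutely_continuous (measure_pmf (map_pmf snd P)) (measure_pmf (Q z y))"
    and d1: "dS s z \<le> ds" and d2: "dX x y \<le> dx"
    and f: "ereal \<gamma> \<le> f_info b P Q dS dX M ds dx s x z y"
  shows "pmf (map_pmf snd P) x \<le> pmf (Q z y) x * (b powr (-\<gamma>) / M)"
proof -
  define p where "p = pmf (map_pmf snd P) x"
  define q where "q = pmf (Q z y) x"
  have R: "enn2real (RN_deriv (measure_pmf (map_pmf snd P)) (measure_pmf (Q z y)) x) = q / p"
    unfolding p_def q_def by (rule RN_pmf[OF ac px])
  have "ereal \<gamma> \<le> ereal_log b (q / p) - ereal (log b (real M))"
    using f unfolding f_info_def R SUP_zero[OF d1] SUP_zero[OF d2] by simp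
  moreover have p0: "p > 0" using px p_def by simp
  moreover have "q \<ge> 0" by (simp add: q_def)
  ultimately have q0: "q > 0" and g: "\<gamma> \<le> log b (q / p) - log b (real M)"
    by (auto simp: ereal_log_def split: if_splits)
  have "b powr (\<gamma> + log b (real M)) \<le> b powr (log b (q / p))"
    using g b by (intro powr_mono) auto
  also have "\<dots> = q / p" using b q0 p0 by simp
  finally have "b powr \<gamma> * real M \<le> q / p"
    using b M by (simp add: powr_add)
  then have "p * (b powr \<gamma> * real M) \<le> q" using p0 by (simp add: field_simps)
  then show ?thesis
    using M b unfolding p_def[symmetric] q_def[symmetric]
    by (simp add: powr_minus field_simps)
qed


lemma collapse:
  fixes p :: "('s::finite \<times> 'x::finite) \<Rightarrow> real"
  shows "(\<Sum>sx\<in>UNIV. p sx * h (snd sx)) = (\<Sum>x\<in>UNIV. (\<Sum>sx\<in>UNIV. if snd sx = x then p sx else 0) * h x)"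
proof -
  have "(\<Sum>x\<in>UNIV. (\<Sum>sx\<in>UNIV. if snd sx = x then p sx else 0) * h x)
      = (\<Sum>x\<in>UNIV. \<Sum>sx\<in>UNIV. if snd sx = x then p sx * h x else 0)"
    by (auto simp: sum_distrib_right intro!: sum.cong)
  also have "\<dots> = (\<Sum>sx\<in>UNIV. \<Sum>x\<in>UNIV. if snd sx = x then p sx * h x else 0)"
    by (rule sum.swap)
  also have "\<dots> = (\<Sum>sx\<in>UNIV. p sx * h (snd sx))"
    by simp
  finally show ?thesis by simp
qed

lemma prob_pairs:
  fixes J :: "(('a::finite) \<times> ('b::finite)) pmf"
  shows "measure_pmf.prob J A = (\<Sum>a\<in>UNIV. \<Sum>b\<in>UNIV. pmf J (a, b) * of_bool ((a, b) \<in> A))"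
proof -
  have "measure_pmf.prob J A = sum (pmf J) {z \<in> UNIV. z \<in> A}"
    by (simp add: measure_measure_pmf_finite)
  also have "\<dots> = (\<Sum>z\<in>UNIV. if z \<in> A then pmf J z else 0)"
    by (rule sum.inter_filter) simp
  also have "\<dots> = (\<Sum>z\<in>UNIV \<times> UNIV. pmf J z * of_bool (z \<in> A))"
    by (simp only: UNIV_Times_UNIV) (intro sum.cong refl, simp)
  also have "\<dots> = (\<Sum>a\<in>UNIV. \<Sum>b\<in>UNIV. pmf J (a, b) * of_bool ((a, b) \<in> A))"
    by (simp only: sum.cartesian_product) (simp only: split_def prod.collapse)
  finally show ?thesis .
qed


theorem corollary1:
  fixes P :: "('s::finite \<times> 'x::finite) pmf"
    and dS :: "'s \<Rightarrow> 'sh::finite \<Rightarrow> real"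
    and dX :: "'x \<Rightarrow> 'xh::finite \<Rightarrow> real"
    and M :: nat and ds dx \<epsilon> b :: real
    and enc :: "'x \<Rightarrow> nat pmf" and dec :: "nat \<Rightarrow> ('sh \<times> 'xh) pmf"
  assumes "b > 1"
    and "\<And>s z. dS s z \<ge> 0" and "\<And>x y. dX x y \<ge> 0"
    and "ds \<ge> 0" and "dx \<ge> 0"
    and "is_code P dS dX M ds dx \<epsilon> enc dec"
  shows "ereal \<epsilon> \<ge>
    (SUP Q\<in>{Q :: 'sh \<Rightarrow> 'xh \<Rightarrow> 'x pmf. \<forall>z y.
              absolutely_continuous (measure_pmf (map_pmf snd P)) (measure_pmf (Q z y))}.
       SUP \<gamma>\<in>{0::real..}. ereal (bound_term b P Q dS dX M ds dx \<gamma>))"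
proof -
  note b = assms(1)
  have enc: "\<And>x. set_pmf (enc x) \<subseteq> {1..M}"
    and probJ: "measure_pmf.prob (code_joint P enc dec)
        {((s, x), (z, y)). dS s z > ds \<or> dX x y > dx} \<le> \<epsilon>"
    using assms(6) unfolding is_code_def by auto
  obtain x0 :: 'x where True by blast
  obtain u where "u \<in> set_pmf (enc x0)" using set_pmf_not_empty[of "enc x0"] by blast
  with enc[of x0] have M1: "M \<ge> 1" by auto
  show ?thesis
  proof (intro SUP_least)
    fix Q :: "'sh \<Rightarrow> 'xh \<Rightarrow> 'x pmf" and \<gamma> :: real
    assume "Q \<in> {Q. \<forall>z y. absolutely_continuous (measure_pmf (map_pmf snd P)) (measure_pmf (Q z y))}"
    then have ac: "\<And>z y. absolutely_continuous (measure_pmf (map_pmf snd P)) (measure_pmf (Q z y))" by auto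
    define px where "px x = pmf (map_pmf snd P) x" for x
    define W where "W x zy = pmf (bind_pmf (enc x) dec) zy" for x zy
    define F where "F sx zy = (of_bool (ereal \<gamma> \<le> f_info b P Q dS dX M ds dx (fst sx) (snd sx) (fst zy) (snd zy)) :: real)" for sx zy
    define g where "g x zy = measure_pmf.prob (cond_pmf P {sx. snd sx = x})
                {sx. ereal \<gamma> \<le> f_info b P Q dS dX M ds dx (fst sx) (snd sx) (fst zy) (snd zy)}" for x zy
    define I where "I x = (INF zy\<in>UNIV. g x zy)" for x
    define c where "c = b powr (-\<gamma>) / real M"
    define Ex where "Ex sx zy = (of_bool (ds < dS (fst sx) (fst zy) \<or> dx < dX (snd sx) (snd zy)) :: real)" for sx zy
    define G where "G x zy = (of_bool (px x \<le> pmf (Q (fst zy) (snd zy)) x * c) :: real)" for x zy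
    have c0: "c \<ge> 0" unfolding c_def by simp
    have W0: "W x zy \<ge> 0" for x zy by (simp add: W_def)
    have bt: "bound_term b P Q dS dX M ds dx \<gamma> = (\<Sum>x\<in>UNIV. px x * I x) - b powr (-\<gamma>)"
      unfolding bound_term_def I_def g_def px_def
      by (subst integral_measure_pmf[of UNIV]) auto
    have step1: "px x * I x \<le> (\<Sum>sx\<in>UNIV. \<Sum>zy\<in>UNIV. if snd sx = x then pmf P sx * W x zy * F sx zy else 0)" for x
    proof (cases "px x = 0")
      case True
      then show ?thesis by (auto intro!: sum_nonneg simp: W0 F_def)
    next
      case False
      then have pxpos: "px x > 0" using pmf_nonneg[of "map_pmf snd P" x] unfolding px_def by linarith
      then have "x \<in> set_pmf (map_pmf snd P)" unfolding px_def by (metis less_irrefl set_pmf_iff)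
      then have ne: "set_pmf P \<inter> {sx. snd sx = x} \<noteq> {}" by auto
      have mP: "measure_pmf.prob P {sx. snd sx = x} = px x"
        unfolding px_def by (simp add: pmf_map vimage_def)
      have gx: "px x * g x zy = (\<Sum>sx\<in>UNIV. if snd sx = x then pmf P sx * F sx zy else 0)" for zy
      proof -
        have "g x zy = (\<Sum>sx\<in>UNIV. if ereal \<gamma> \<le> f_info b P Q dS dX M ds dx (fst sx) (snd sx) (fst zy) (snd zy)
                 then pmf (cond_pmf P {sx. snd sx = x}) sx else 0)"
          unfolding g_def measure_measure_pmf_finite[OF finite]
          by (subst sum.inter_filter[symmetric]) auto
        also have "\<dots> = (\<Sum>sx\<in>UNIV. if snd sx = x then pmf P sx * F sx zy / px x else 0)"
          by (intro sum.cong refl) (auto simp: pmf_cond[OF ne] mP F_def)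
        finally show ?thesis using pxpos
          by (simp add: sum_distrib_left if_distrib cong: if_cong)
      qed
      have gnn: "g x zy \<ge> 0" for zy by (simp add: g_def)
      have Ile: "I x \<le> g x zy" for zy
        unfolding I_def by (rule cINF_lower) (auto intro!: bdd_belowI[of _ 0] gnn)
      have "I x = (\<Sum>zy\<in>UNIV. W x zy) * I x"
        by (simp add: W_def sum_pmf_eq_1)
      also have "\<dots> \<le> (\<Sum>zy\<in>UNIV. W x zy * g x zy)"
        unfolding sum_distrib_right by (intro sum_mono mult_left_mono Ile W0)
      finally have Ix: "I x \<le> (\<Sum>zy\<in>UNIV. W x zy * g x zy)" .
      have "px x * I x \<le> px x * (\<Sum>zy\<in>UNIV. W x zy * g x zy)"
        using Ix pxpos by (intro mult_left_mono) auto
      also have "\<dots> = (\<Sum>zy\<in>UNIV. W x zy * (px x * g x zy))"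
        by (simp add: sum_distrib_left mult_ac)
      also have "\<dots> = (\<Sum>zy\<in>UNIV. \<Sum>sx\<in>UNIV. if snd sx = x then pmf P sx * W x zy * F sx zy else 0)"
        unfolding gx by (simp add: sum_distrib_left if_distrib mult_ac cong: if_cong)
      also have "\<dots> = (\<Sum>sx\<in>UNIV. \<Sum>zy\<in>UNIV. if snd sx = x then pmf P sx * W x zy * F sx zy else 0)"
        by (rule sum.swap)
      finally show ?thesis .
    qed
    have "(\<Sum>x\<in>UNIV. px x * I x) \<le> (\<Sum>x\<in>UNIV. \<Sum>sx\<in>UNIV. \<Sum>zy\<in>UNIV. if snd sx = x then pmf P sx * W x zy * F sx zy else 0)"
      by (intro sum_mono step1)
    also have "\<dots> = (\<Sum>sx\<in>UNIV. \<Sum>x\<in>UNIV. \<Sum>zy\<in>UNIV. if snd sx = x then pmf P sx * W x zy * F sx zy else 0)"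
      by (rule sum.swap)
    also have "\<dots> = (\<Sum>sx\<in>UNIV. \<Sum>zy\<in>UNIV. pmf P sx * W (snd sx) zy * F sx zy)"
      by (intro sum.cong refl, subst sum.swap, simp)
    also have "\<dots> \<le> (\<Sum>sx\<in>UNIV. \<Sum>zy\<in>UNIV. pmf P sx * W (snd sx) zy * Ex sx zy + pmf P sx * W (snd sx) zy * G (snd sx) zy)"
    proof (intro sum_mono)
      fix sx :: "'s \<times> 'x" and zy :: "'sh \<times> 'xh"
      obtain s x where sx: "sx = (s, x)" by (cases sx)
      obtain z y where zy: "zy = (z, y)" by (cases zy)
      have pW: "pmf P sx * W (snd sx) zy \<ge> 0" by (simp add: W0)
      show "pmf P sx * W (snd sx) zy * F sx zy \<le> pmf P sx * W (snd sx) zy * Ex sx zy + pmf P sx * W (snd sx) zy * G (snd sx) zy"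
      proof (cases "(ds < dS (fst sx) (fst zy) \<or> dx < dX (snd sx) (snd zy)) \<or> F sx zy = 0 \<or> pmf P sx = 0")
        case True
        then show ?thesis using pW by (auto simp: Ex_def F_def G_def)
      next
        case False
        then have nd1: "dS s z \<le> ds" and nd2: "dX x y \<le> dx" and Fx: "ereal \<gamma> \<le> f_info b P Q dS dX M ds dx s x z y"
          and pP: "pmf P sx \<noteq> 0"
          by (auto simp: Ex_def F_def sx zy split: if_splits)
        have "sx \<in> set_pmf P" using pP by (simp add: set_pmf_iff)
        then have "x \<in> set_pmf (map_pmf snd P)" using sx by force
        then have pxp: "0 < pmf (map_pmf snd P) x" by (simp add: pmf_positive)
        have "px x \<le> pmf (Q z y) x * c"
          unfolding px_def c_def by (rule point[OF b M1 pxp ac nd1 nd2 Fx])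
        then have "G (snd sx) zy = 1" by (simp add: G_def sx zy)
        then show ?thesis using False pW by (simp add: Ex_def F_def)
      qed
    qed
    also have "\<dots> = (\<Sum>sx\<in>UNIV. \<Sum>zy\<in>UNIV. pmf P sx * W (snd sx) zy * Ex sx zy)
        + (\<Sum>sx\<in>UNIV. pmf P sx * (\<Sum>zy\<in>UNIV. W (snd sx) zy * G (snd sx) zy))"
      by (simp add: sum.distrib sum_distrib_left mult_ac)
    also have "(\<Sum>sx\<in>UNIV. \<Sum>zy\<in>UNIV. pmf P sx * W (snd sx) zy * Ex sx zy)
        = measure_pmf.prob (code_joint P enc dec) {((s, x), (z, y)). dS s z > ds \<or> dX x y > dx}"
      unfolding prob_pairs pmf_code_joint W_def Ex_def
      by (intro sum.cong refl) (auto simp: split_beta)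
    also have "(\<Sum>sx\<in>UNIV. pmf P sx * (\<Sum>zy\<in>UNIV. W (snd sx) zy * G (snd sx) zy))
        = (\<Sum>x\<in>UNIV. \<Sum>zy\<in>UNIV. px x * W x zy * G x zy)"
    proof -
      have "(\<Sum>sx\<in>UNIV. pmf P sx * (\<Sum>zy\<in>UNIV. W (snd sx) zy * G (snd sx) zy))
         = (\<Sum>x\<in>UNIV. (\<Sum>sx\<in>UNIV. if snd sx = x then pmf P sx else 0) * (\<Sum>zy\<in>UNIV. W x zy * G x zy))"
        by (rule collapse)
      also have "\<dots> = (\<Sum>x\<in>UNIV. px x * (\<Sum>zy\<in>UNIV. W x zy * G x zy))"
        by (simp only: px_def px_sum)
      also have "\<dots> = (\<Sum>x\<in>UNIV. \<Sum>zy\<in>UNIV. px x * W x zy * G x zy)"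
        by (simp add: sum_distrib_left mult_ac)
      finally show ?thesis .
    qed
    also have "\<dots> \<le> c * real M"
      unfolding W_def G_def
      by (rule key_sum[where px=px and dec=dec and Q=Q and enc=enc and c=c and M=M, OF enc c0])
        (simp add: px_def)
    also have "c * real M = b powr (-\<gamma>)" using M1 by (simp add: c_def)
    finally have "(\<Sum>x\<in>UNIV. px x * I x) \<le> \<epsilon> + b powr (-\<gamma>)" using probJ by linarith
    then show "ereal (bound_term b P Q dS dX M ds dx \<gamma>) \<le> ereal \<epsilon>"
      unfolding bt by simp
  qed
qed

end
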